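(* Let $\mathfrak L=\mathbb V\oplus\mathbb W$ be a color gLt-algebra admitting a quasi-multiplicative basis $\mathfrak B=\{e_i\}_{i\in I}$ of $\mathbb W\neq 0$, and let $\phi$ be the associated map defined in the context. Let $J\subset I\,\dot\cup\,\overline I$ with $J=\overline J$, let $X\in\mathfrak I^{\,n-1}\,\dot\cup\,\overline{\mathfrak I}^{\,n-1}$ and $i\in I$. The following are equivalent: (1) $i\in\phi(J,X)$; (2) either $\phi(\{i\},\overline X)\cap J\cap I\neq\emptyset$ or $\phi(\{\overline i\},X)\cap J\cap I\neq\emptyset$.
   Context: Let $\mathbb F$ be a field, $\mathbb G$ an abelian group, $n\ge 2$, and $\epsilon:\mathbb G\times\mathbb G\to\mathbb F\setminus\{0\}$ a bicharacter ($\epsilon(k,g+h)=\epsilon(k,g)\epsilon(k,h)$, $\epsilon(g+h,k)=\epsilon(g,k)\epsilon(h,k)$, $\epsilon(g,h)\epsilon(h,g)=1$). A graded $n$-ary algebra is a $\mathbb G$-graded vector space $\mathfrak L=\bigoplus_{g\in\mathbb G}\mathfrak L_g$ with an $n$-linear map $\langle\cdot,\dots,\cdot\rangle:\mathfrak L^n\to\mathfrak L$ such that $\langle\mathfrak L_{g_1},\dots,\mathfrak L_{g_n}\rangle\subset\mathfrak L_{g_1+\dots+g_n}$. For $\sigma\in\mathbb S_n$ write $\langle x_1,\dots,x_n\rangle_\sigma:=\langle x_{\sigma(1)},\dots,x_{\sigma(n)}\rangle$; for subsets $A_1,\dots,A_n$, $\langle A_1,\dots,A_n\rangle_\sigma$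 denotes the linear span of all $\langle x_1,\dots,x_n\rangle_\sigma$ with $x_r\in A_r$. A color gLt-algebra is a graded $n$-ary algebra satisfying, for each $k=1,\dots,n$ and fixed scalars $\alpha^{\sigma_1,\sigma_2}_{i,j,k}\in\mathbb F$, the color version (each term on the right multiplied by the product of values of $\epsilon$ on the degrees of the homogeneous arguments transposed in passing from the left-hand order to the order of that term) of the identity $\langle y_1,\dots,y_{k-1},\langle x_1,\dots,x_n\rangle,y_k,\dots,y_{n-1}\rangle=\sum_{1\le i,j\le n,\,\sigma_1\in\mathbb S_n,\,\sigma_2\in\mathbb S_{n-1}}\alpha^{\sigma_1,\sigma_2}_{i,j,k}\langle x_{\sigma_1(1)},\dots,x_{\sigma_1(i-1)},\langle y_{\sigma_2(1)},\dots,y_{\sigma_2(j-1)},x_{\sigma_1(i)},y_{\sigma_2(j)},\dots,y_{\sigma_2(n-1)}\rangle,x_{\sigma_1(i+1)},\dots,x_{\sigma_1(n)}\rangle$. $\mathfrak L$ admits a quasi-multiplicative basis if $\mathfrak L=\mathbb V\oplus\mathbb W$ with $\mathbb V$, $\mathbb W\ne0$ graded subspaces and $\mathfrak B=\{e_i\}_{i\in I}$ a basis of homogeneous elements of $\mathbb W$ such that: (1) for $i_1,\dots,i_n\in I$, either $\langle e_{i_1},\dots,e_{i_n}\rangle\in\mathbb Fe_j$ for some $j\in I$ or $\langle e_{i_1},\dots,e_{i_n}\rangle\in\mathbb V$; (2) for $0<k<n$, $i_1,\dots,i_k\in I$ and $\sigma\in\mathbb S_n$, $\langle e_{i_1},\dots,e_{i_k},\mathbb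 V,\dots,\mathbb V\rangle_\sigma\subset\mathbb Fe_{j_\sigma}$ for some $j_\sigma\in I$; (3) either $\langle\mathbb V,\dots,\mathbb V\rangle\subset\mathbb Fe_j$ for some $j\in I$ or $\langle\mathbb V,\dots,\mathbb V\rangle\subset\mathbb V$. Index maps: let $v$ be a symbol not in $I$, $\mathfrak I:=I\,\dot\cup\,\{v\}$; for each $j\in\mathfrak I$ take a new symbol $\overline j$, $\overline I:=\{\overline i:i\in I\}$, $\overline{\mathfrak I}:=\overline I\,\dot\cup\,\{\overline v\}$; set $\overline{(\overline j)}:=j$, $\overline J:=\{\overline j:j\in J\}$ for a set $J$ of symbols ($\overline\emptyset=\emptyset$), and $\overline X:=(\overline a_2,\dots,\overline a_n)$ for a tuple $X=(a_2,\dots,a_n)$. Put $u_j:=e_j$ for $j\in I$ and $u_v:=\mathbb V$. For $\sigma\in\mathbb S_n$ and $(j_1,\dots,j_n)\in\mathfrak I^n$ let $a_\sigma(j_1,\dots,j_n)=\{r\}$ if $r\in I$ and $0\ne\langle u_{j_1},\dots,u_{j_n}\rangle_\sigma\subset\mathbb Fe_r$, $=\{v\}$ if $0\ne\langle u_{j_1},\dots,u_{j_n}\rangle_\sigma\subset\mathbb V$, and $=\emptyset$ otherwise. For $j,j_2,\dots,j_n\in\mathfrak I$ let $b_\sigma(j,\overline j_2,\dots,\overline j_n):=\{x\in\mathfrak I: a_\sigma(x,j_2,\dots,j_n)=\{j\}\}$. Define $\mu$ on $(\mathfrak I\,\dot\cup\,\overline{\mathfrak I})\times(\mathfrak I^{n-1}\,\dot\cup\,\overline{\mathfrak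 I}^{n-1})$ with values subsets of $\mathfrak I$ by: $\mu(j,j_1,\dots,j_{n-1})=\bigcup_{\sigma\in\mathbb S_n}a_\sigma(j,j_1,\dots,j_{n-1})$ for $j,j_1,\dots,j_{n-1}\in\mathfrak I$; $\mu(j,\overline j_1,\dots,\overline j_{n-1})=\bigcup_{\sigma\in\mathbb S_n}b_\sigma(j,\overline j_1,\dots,\overline j_{n-1})$ for $j,j_1,\dots,j_{n-1}\in\mathfrak I$; $\mu(\overline j,j_1,\dots,j_{n-1})=\bigcup_{1\le k\le n-1,\ \sigma\in\mathbb S_n}b_\sigma(j_k,\overline j,\overline j_1,\dots,\overline j_{k-1},\overline j_{k+1},\dots,\overline j_{n-1})$ for $j,j_1,\dots,j_{n-1}\in\mathfrak I$; and $\mu(\overline j,\overline j_1,\dots,\overline j_{n-1})=\emptyset$. Define $\phi$ on pairs $(J,X)$ with $J\subset I\,\dot\cup\,\overline I$ and $X\in\mathfrak I^{n-1}\,\dot\cup\,\overline{\mathfrak I}^{n-1}$ by $\phi(\emptyset,X)=\emptyset$ and, for $J\ne\emptyset$, $\phi(J,X):=K\cup\overline K$ where $K:=\big(\bigcup_{j\in J}\mu(j,X)\big)\setminus\{v\}$. *)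

theory Defs
  imports Complex_Main "HOL-Combinatorics.Permutations"
begin

definition bichar :: "('g::ab_group_add \<Rightarrow> 'g \<Rightarrow> 'k::field) \<Rightarrow> bool" where
  "bichar \<epsilon> \<longleftrightarrow> (\<forall>g h. \<epsilon> g h \<noteq> 0)
     \<and> (\<forall>k g h. \<epsilon> k (g + h) = \<epsilon> k g * \<epsilon> k h)
     \<and> (\<forall>g h k. \<epsilon> (g + h) k = \<epsilon> g k * \<epsilon> h k)
     \<and> (\<forall>g h. \<epsilon> g h * \<epsilon> h g = 1)"

definition grading :: "('k::field \<Rightarrow> 'v::ab_group_add \<Rightarrow> 'v) \<Rightarrow> ('g \<Rightarrow> 'v set) \<Rightarrow> bool" where
  "grading scale L \<longleftrightarrow> (\<forall>g. module.subspace scale (L g))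
     \<and> (\<forall>x. \<exists>!c. finite {g. c g \<noteq> 0} \<and> (\<forall>g. c g \<in> L g) \<and> x = sum c {g. c g \<noteq> 0})"

definition graded_subspace :: "('k::field \<Rightarrow> 'v::ab_group_add \<Rightarrow> 'v) \<Rightarrow> ('g \<Rightarrow> 'v set) \<Rightarrow> 'v set \<Rightarrow> bool" where
  "graded_subspace scale L S \<longleftrightarrow> module.subspace scale S
     \<and> (\<forall>x\<in>S. \<forall>c. (finite {g. c g \<noteq> 0} \<and> (\<forall>g. c g \<in> L g) \<and> x = sum c {g. c g \<noteq> 0})
                   \<longrightarrow> (\<forall>g. c g \<in> S))"

text \<open>The n-ary product is a map on lists; only lists of length n matter.
  Arguments are indexed 0..n-1.\<close>
definition graded_nary_algebra ::
  "('k::field \<Rightarrow> 'v::ab_group_add \<Rightarrow> 'v) \<Rightarrow> ('g::ab_group_add \<Rightarrow> 'v set) \<Rightarrow> nat \<Rightarrow> ('v list \<Rightarrow> 'v) \<Rightarrow> bool" where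
  "graded_nary_algebra scale L n m \<longleftrightarrow> vector_space scale \<and> grading scale L
     \<and> (\<forall>x r. r < n \<longrightarrow> Vector_Spaces.linear scale scale (\<lambda>z. m (map (x(r := z)) [0..<n])))
     \<and> (\<forall>x d. (\<forall>r<n. x r \<in> L (d r)) \<longrightarrow> m (map x [0..<n]) \<in> L (\<Sum>r<n. d r))"

text \<open>\<open>\<langle>x_1,...,x_n\<rangle>_\<sigma> = \<langle>x_\<sigma>(1),...,x_\<sigma>(n)\<rangle>\<close> (0-indexed).\<close>
definition nprod :: "('v list \<Rightarrow> 'v) \<Rightarrow> nat \<Rightarrow> (nat \<Rightarrow> 'v) \<Rightarrow> (nat \<Rightarrow> nat) \<Rightarrow> 'v" where
  "nprod m n x \<sigma> = m (map (\<lambda>r. x (\<sigma> r)) [0..<n])"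

text \<open>Atoms: \<open>Inl r\<close> stands for \<open>x_r\<close> (r < n), \<open>Inr s\<close> for \<open>y_s\<close> (s < n-1).
  Order of the atoms on the left hand side, and in the (i,j,sigma1,sigma2)-term on the right.\<close>
definition lhs_order :: "nat \<Rightarrow> nat \<Rightarrow> (nat + nat) list" where
  "lhs_order n k = map Inr [0..<k] @ map Inl [0..<n] @ map Inr [k..<n-1]"

definition rhs_order :: "nat \<Rightarrow> (nat \<Rightarrow> nat) \<Rightarrow> (nat \<Rightarrow> nat) \<Rightarrow> nat \<Rightarrow> nat \<Rightarrow> (nat + nat) list" where
  "rhs_order n \<sigma>1 \<sigma>2 i j = map (Inl \<circ> \<sigma>1) [0..<i] @ map (Inr \<circ> \<sigma>2) [0..<j] @ [Inl (\<sigma>1 i)]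
      @ map (Inr \<circ> \<sigma>2) [j..<n-1] @ map (Inl \<circ> \<sigma>1) [Suc i..<n]"

definition pos :: "'a list \<Rightarrow> 'a \<Rightarrow> nat" where
  "pos xs a = (LEAST p. p < length xs \<and> xs ! p = a)"

definition color_factor :: "('g \<Rightarrow> 'g \<Rightarrow> 'k::field) \<Rightarrow> ('a \<Rightarrow> 'g) \<Rightarrow> 'a list \<Rightarrow> 'a list \<Rightarrow> 'k" where
  "color_factor \<epsilon> deg Lo Ro =
     (\<Prod>(a, b)\<in>{(a, b). a \<in> set Lo \<and> b \<in> set Lo \<and> pos Lo a < pos Lo b \<and> pos Ro b < pos Ro a}.
        \<epsilon> (deg a) (deg b))"

definition color_gLt ::
  "('k::field \<Rightarrow> 'v::ab_group_add \<Rightarrow> 'v) \<Rightarrow> ('g::ab_group_add \<Rightarrow> 'v set) \<Rightarrow> ('g \<Rightarrow> 'g \<Rightarrow> 'k)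
   \<Rightarrow> nat \<Rightarrow> ('v list \<Rightarrow> 'v) \<Rightarrow> ((nat \<Rightarrow> nat) \<Rightarrow> (nat \<Rightarrow> nat) \<Rightarrow> nat \<Rightarrow> nat \<Rightarrow> nat \<Rightarrow> 'k) \<Rightarrow> bool" where
  "color_gLt scale L \<epsilon> n m \<alpha> \<longleftrightarrow> graded_nary_algebra scale L n m \<and>
    (\<forall>k<n. \<forall>x y dx dy. (\<forall>r<n. x r \<in> L (dx r)) \<and> (\<forall>s<n-1. y s \<in> L (dy s)) \<longrightarrow>
       m (map y [0..<k] @ [m (map x [0..<n])] @ map y [k..<n-1]) =
       (\<Sum>i<n. \<Sum>j<n. \<Sum>\<sigma>1\<in>{\<sigma>. \<sigma> permutes {..<n}}. \<Sum>\<sigma>2\<in>{\<sigma>. \<sigma> permutes {..<n-1}}.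
          scale (\<alpha> \<sigma>1 \<sigma>2 i j k * color_factor \<epsilon> (case_sum dx dy) (lhs_order n k) (rhs_order n \<sigma>1 \<sigma>2 i j))
            (let xs = map (x \<circ> \<sigma>1) [0..<n]; ys = map (y \<circ> \<sigma>2) [0..<n-1] in
             m (take i xs @ [m (take j ys @ [xs ! i] @ drop j ys)] @ drop (Suc i) xs))))"

definition line :: "('k \<Rightarrow> 'v \<Rightarrow> 'v) \<Rightarrow> 'v \<Rightarrow> 'v set" where
  "line scale v = {scale c v | c. True}"

definition prodset :: "('k::field \<Rightarrow> 'v::ab_group_add \<Rightarrow> 'v) \<Rightarrow> ('v list \<Rightarrow> 'v) \<Rightarrow> nat
   \<Rightarrow> (nat \<Rightarrow> 'v set) \<Rightarrow> (nat \<Rightarrow> nat) \<Rightarrow> 'v set" where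
  "prodset scale m n A \<sigma> = module.span scale {nprod m n x \<sigma> | x. \<forall>r<n. x r \<in> A r}"

definition qm_basis :: "('k::field \<Rightarrow> 'v::ab_group_add \<Rightarrow> 'v) \<Rightarrow> ('g::ab_group_add \<Rightarrow> 'v set) \<Rightarrow> nat
   \<Rightarrow> ('v list \<Rightarrow> 'v) \<Rightarrow> 'v set \<Rightarrow> 'v set \<Rightarrow> ('i \<Rightarrow> 'v) \<Rightarrow> bool" where
  "qm_basis scale L n m V W e \<longleftrightarrow>
     graded_subspace scale L V \<and> graded_subspace scale L W \<and> V \<noteq> {0} \<and> W \<noteq> {0}
     \<and> (\<forall>z. \<exists>a\<in>V. \<exists>b\<in>W. z = a + b) \<and> V \<inter> W = {0}
     \<and> inj e \<and> \<not> module.dependent scale (range e) \<and> module.span scale (range e) = W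
     \<and> (\<forall>i. \<exists>g. e i \<in> L g)
     \<and> (\<forall>is. (\<exists>j. m (map (e \<circ> is) [0..<n]) \<in> line scale (e j)) \<or> m (map (e \<circ> is) [0..<n]) \<in> V)
     \<and> (\<forall>k is \<sigma>. 0 < k \<and> k < n \<and> \<sigma> permutes {..<n} \<longrightarrow>
          (\<exists>j. prodset scale m n (\<lambda>r. if r < k then {e (is r)} else V) \<sigma> \<subseteq> line scale (e j)))
     \<and> ((\<exists>j. prodset scale m n (\<lambda>_. V) id \<subseteq> line scale (e j)) \<or> prodset scale m n (\<lambda>_. V) id \<subseteq> V)"

text \<open>Symbols of \<open>\<I> = I \<union> {v}\<close> are \<open>'i option\<close> (\<open>None\<close> = v); \<open>Pl\<close>/\<open>Br\<close> mark unbarred/barred symbols.\<close>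
datatype 'i sym = Pl "'i option" | Br "'i option"

fun bar :: "'i sym \<Rightarrow> 'i sym" where
  "bar (Pl j) = Br j" | "bar (Br j) = Pl j"

fun unsym :: "'i sym \<Rightarrow> 'i option" where
  "unsym (Pl j) = j" | "unsym (Br j) = j"

definition usym :: "'v set \<Rightarrow> ('i \<Rightarrow> 'v) \<Rightarrow> 'i option \<Rightarrow> 'v set" where
  "usym V e j = (case j of Some i \<Rightarrow> {e i} | None \<Rightarrow> V)"

definition amap :: "('k::field \<Rightarrow> 'v::ab_group_add \<Rightarrow> 'v) \<Rightarrow> ('v list \<Rightarrow> 'v) \<Rightarrow> nat \<Rightarrow> 'v set
   \<Rightarrow> ('i \<Rightarrow> 'v) \<Rightarrow> (nat \<Rightarrow> nat) \<Rightarrow> 'i option list \<Rightarrow> 'i option set" where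
  "amap scale m n V e \<sigma> js =
     (let P = prodset scale m n (\<lambda>r. usym V e (js ! r)) \<sigma> in
      {Some r | r. P \<noteq> {0} \<and> P \<subseteq> line scale (e r)} \<union> {None | _::unit. P \<noteq> {0} \<and> P \<subseteq> V})"

definition bmap :: "('k::field \<Rightarrow> 'v::ab_group_add \<Rightarrow> 'v) \<Rightarrow> ('v list \<Rightarrow> 'v) \<Rightarrow> nat \<Rightarrow> 'v set
   \<Rightarrow> ('i \<Rightarrow> 'v) \<Rightarrow> (nat \<Rightarrow> nat) \<Rightarrow> 'i option \<Rightarrow> 'i option list \<Rightarrow> 'i option set" where
  "bmap scale m n V e \<sigma> j js = {x. amap scale m n V e \<sigma> (x # js) = {j}}"

definition all_pl :: "'i sym list \<Rightarrow> bool" where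
  "all_pl X \<longleftrightarrow> (\<forall>t\<in>set X. \<exists>j. t = Pl j)"

definition all_br :: "'i sym list \<Rightarrow> bool" where
  "all_br X \<longleftrightarrow> (\<forall>t\<in>set X. \<exists>j. t = Br j)"

text \<open>\<open>\<mu>\<close> (only meaningful for X a tuple of n-1 symbols all unbarred or all barred).\<close>
fun mu :: "('k::field \<Rightarrow> 'v::ab_group_add \<Rightarrow> 'v) \<Rightarrow> ('v list \<Rightarrow> 'v) \<Rightarrow> nat \<Rightarrow> 'v set
   \<Rightarrow> ('i \<Rightarrow> 'v) \<Rightarrow> 'i sym \<Rightarrow> 'i sym list \<Rightarrow> 'i option set" where
  "mu scale m n V e (Pl j) X =
     (if all_pl X then (\<Union>\<sigma>\<in>{\<sigma>. \<sigma> permutes {..<n}}. amap scale m n V e \<sigma> (j # map unsym X))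
      else if all_br X then (\<Union>\<sigma>\<in>{\<sigma>. \<sigma> permutes {..<n}}. bmap scale m n V e \<sigma> j (map unsym X))
      else {})"
| "mu scale m n V e (Br j) X =
     (if all_pl X then
        (\<Union>k<n-1. \<Union>\<sigma>\<in>{\<sigma>. \<sigma> permutes {..<n}}.
            bmap scale m n V e \<sigma> (unsym (X ! k)) (j # map unsym (take k X @ drop (Suc k) X)))
      else {})"

definition phi :: "('k::field \<Rightarrow> 'v::ab_group_add \<Rightarrow> 'v) \<Rightarrow> ('v list \<Rightarrow> 'v) \<Rightarrow> nat \<Rightarrow> 'v set
   \<Rightarrow> ('i \<Rightarrow> 'v) \<Rightarrow> 'i sym set \<Rightarrow> 'i sym list \<Rightarrow> 'i sym set" where
  "phi scale m n V e J X =
     (if J = {} then {}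
      else (let K = {i. Some i \<in> (\<Union>j\<in>J. mu scale m n V e j X)} in
            (Pl \<circ> Some) ` K \<union> (Br \<circ> Some) ` K))"

end

theory Submission
  imports Defs
begin

lemma amap_single:
  assumes vs: "vector_space scale" and qm: "qm_basis scale L n m V W e"
    and mem: "Some r \<in> amap scale m n V e \<sigma> js"
  shows "amap scale m n V e \<sigma> js = {Some r}"
proof -
  interpret vs: vector_space scale by (rule vs)
  define P where "P = prodset scale m n (\<lambda>r. usym V e (js ! r)) \<sigma>"
  have am: "amap scale m n V e \<sigma> js = {Some r | r. P \<noteq> {0} \<and> P \<subseteq> line scale (e r)} \<union> {None | _::unit. P \<noteq> {0} \<and> P \<subseteq> V}"
    unfolding amap_def P_def Let_def by simp
  from mem have P0: "P \<noteq> {0}" and Pr: "P \<subseteq> line scale (e r)" unfolding am by auto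
  have "0 \<in> P" unfolding P_def prodset_def by (rule vs.span_zero)
  with P0 obtain p where pP: "p \<in> P" and p0: "p \<noteq> 0" by auto
  from Pr pP obtain c where pc: "p = scale c (e r)" unfolding line_def by auto
  with p0 have c0: "c \<noteq> 0" by auto
  from qm have inj: "inj e" and ind: "\<not> vs.dependent (range e)" and spW: "vs.span (range e) = W"
    and VW: "V \<inter> W = {0}" unfolding qm_basis_def by auto
  have "x = Some r" if x: "x \<in> amap scale m n V e \<sigma> js" for x
  proof (cases x)
    case None
    with x have "P \<subseteq> V" unfolding am by auto
    with pP have "p \<in> V" by auto
    moreover have "p \<in> W" unfolding pc spW[symmetric] by (intro vs.span_scale vs.span_base) auto
    ultimately show ?thesis using VW p0 by auto
  next
    case (Some r')
    with x have "P \<subseteq> line scale (e r')" unfolding am by auto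
    with pP obtain d where pd: "p = scale d (e r')" unfolding line_def by auto
    show ?thesis
    proof (rule ccontr)
      assume "x \<noteq> Some r"
      with Some have rr: "r' \<noteq> r" by auto
      have "e r = scale (inverse c) p" using c0 pc by simp
      also have "\<dots> = scale (inverse c * d) (e r')" using pd by simp
      finally have "e r \<in> vs.span (range e - {e r})"
        using rr inj by (metis vs.span_base vs.span_scale DiffI rangeI singletonD inj_eq)
      hence "vs.dependent (range e)" unfolding vs.dependent_def by blast
      with ind show False by blast
    qed
  qed
  with mem show ?thesis by blast
qed

lemma prodset_swap:
  assumes n: "2 \<le> n"
  shows "prodset scale m n A \<sigma> = prodset scale m n (\<lambda>r. A (Transposition.transpose 0 1 r)) (Transposition.transpose 0 1 \<circ> \<sigma>)"
proof -
  let ?t = "Transposition.transpose (0::nat) 1"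
  have tl: "r < n \<Longrightarrow> ?t r < n" for r using n by (auto simp: Transposition.transpose_def)
  have "{nprod m n x \<sigma> | x. \<forall>r<n. x r \<in> A r} = {nprod m n y (?t \<circ> \<sigma>) | y. \<forall>r<n. y r \<in> A (?t r)}"
  proof (intro set_eqI iffI)
    fix z assume "z \<in> {nprod m n x \<sigma> | x. \<forall>r<n. x r \<in> A r}"
    then obtain x where z: "z = nprod m n x \<sigma>" and x: "\<forall>r<n. x r \<in> A r" by auto
    have "z = nprod m n (x \<circ> ?t) (?t \<circ> \<sigma>)" unfolding z nprod_def by simp
    moreover have "\<forall>r<n. (x \<circ> ?t) r \<in> A (?t r)" using x tl by auto
    ultimately show "z \<in> {nprod m n y (?t \<circ> \<sigma>) | y. \<forall>r<n. y r \<in> A (?t r)}" by blast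
  next
    fix z assume "z \<in> {nprod m n y (?t \<circ> \<sigma>) | y. \<forall>r<n. y r \<in> A (?t r)}"
    then obtain y where z: "z = nprod m n y (?t \<circ> \<sigma>)" and y: "\<forall>r<n. y r \<in> A (?t r)" by auto
    have "z = nprod m n (y \<circ> ?t) \<sigma>" unfolding z nprod_def by simp
    moreover have "\<forall>r<n. (y \<circ> ?t) r \<in> A r" using y tl by (metis comp_apply transpose_involutory)
    ultimately show "z \<in> {nprod m n x \<sigma> | x. \<forall>r<n. x r \<in> A r}" by blast
  qed
  thus ?thesis unfolding prodset_def by simp
qed

lemma amap_swap:
  assumes n: "2 \<le> n"
  shows "amap scale m n V e \<sigma> (a # b # rs) = amap scale m n V e (Transposition.transpose 0 1 \<circ> \<sigma>) (b # a # rs)"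
proof -
  let ?t = "Transposition.transpose (0::nat) 1"
  have "(\<lambda>r. usym V e ((b # a # rs) ! r)) = (\<lambda>r. (\<lambda>r. usym V e ((a # b # rs) ! r)) (?t r))"
  proof
    fix r show "usym V e ((b # a # rs) ! r) = usym V e ((a # b # rs) ! ?t r)"
      by (cases r; cases "r - 1") (auto simp: Transposition.transpose_def)
  qed
  thus ?thesis unfolding amap_def using prodset_swap[OF n, of scale m "\<lambda>r. usym V e ((a # b # rs) ! r)" \<sigma>]
    by simp
qed

lemma ex_amap_swap:
  assumes n: "2 \<le> n"
  shows "(\<exists>\<sigma>. \<sigma> permutes {..<n} \<and> amap scale m n V e \<sigma> (a # b # rs) = S) \<longleftrightarrow>
         (\<exists>\<sigma>. \<sigma> permutes {..<n} \<and> amap scale m n V e \<sigma> (b # a # rs) = S)"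
proof -
  let ?t = "Transposition.transpose (0::nat) 1"
  have tp: "?t permutes {..<n}" using n by (intro permutes_swap_id) auto
  show ?thesis
    using amap_swap[OF n, of scale m V e _ a b rs] amap_swap[OF n, of scale m V e _ b a rs]
      permutes_compose[OF _ tp] by blast
qed

lemma phi_mem: "Pl (Some i) \<in> phi scale m n V e J X \<longleftrightarrow> (\<exists>j\<in>J. Some i \<in> mu scale m n V e j X)"
  unfolding phi_def Let_def by auto

lemma phi_single: "(phi scale m n V e {j} X \<inter> J \<inter> range (Pl \<circ> Some) \<noteq> {}) \<longleftrightarrow>
   (\<exists>k. Some k \<in> mu scale m n V e j X \<and> Pl (Some k) \<in> J)"
  unfolding phi_def Let_def by auto

theorem lemma3p3:
  fixes scale :: "'k::field \<Rightarrow> 'v::ab_group_add \<Rightarrow> 'v"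
    and L :: "'g::ab_group_add \<Rightarrow> 'v set"
    and \<epsilon> :: "'g \<Rightarrow> 'g \<Rightarrow> 'k"
    and n :: nat
    and m :: "'v list \<Rightarrow> 'v"
    and \<alpha> :: "(nat \<Rightarrow> nat) \<Rightarrow> (nat \<Rightarrow> nat) \<Rightarrow> nat \<Rightarrow> nat \<Rightarrow> nat \<Rightarrow> 'k"
    and V W :: "'v set"
    and e :: "'i \<Rightarrow> 'v"
    and J :: "'i sym set"
    and X :: "'i sym list"
    and i :: 'i
  assumes "2 \<le> n"
    and "bichar \<epsilon>"
    and "color_gLt scale L \<epsilon> n m \<alpha>"
    and "qm_basis scale L n m V W e"
    and "J \<subseteq> range (Pl \<circ> Some) \<union> range (Br \<circ> Some)"
    and "bar ` J = J"
    and "length X = n - 1"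
    and "all_pl X \<or> all_br X"
  shows "Pl (Some i) \<in> phi scale m n V e J X \<longleftrightarrow>
           (phi scale m n V e {Pl (Some i)} (map bar X) \<inter> J \<inter> range (Pl \<circ> Some) \<noteq> {}
            \<or> phi scale m n V e {Br (Some i)} X \<inter> J \<inter> range (Pl \<circ> Some) \<noteq> {})"
proof -
  note n = assms(1)
  have vs: "vector_space scale" using assms(3) unfolding color_gLt_def graded_nary_algebra_def by auto
  note sing = amap_single[OF vs assms(4)]
  let ?A = "amap scale m n V e"
  let ?mu = "mu scale m n V e"
  define Y where "Y = map unsym X"
  have Xne: "X \<noteq> []" using assms(7) n by auto
  have Yb: "map unsym (map bar X) = Y" unfolding Y_def by (induct X) (auto, metis bar.simps unsym.simps sym.exhaust)
  have aux: "(\<exists>j. bar t = Pl j) = (\<exists>j. t = Br j)" "(\<exists>j. bar t = Br j) = (\<exists>j. t = Pl j)" for t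
    by (cases t; simp)+
  have plb: "all_pl (map bar X) \<longleftrightarrow> all_br X" and brb: "all_br (map bar X) \<longleftrightarrow> all_pl X"
    unfolding all_pl_def all_br_def by (simp_all add: aux)
  have excl: "\<not> (all_pl X \<and> all_br X)" using Xne unfolding all_pl_def all_br_def
    by (cases X) auto
  have Jb: "x \<in> J \<Longrightarrow> bar x \<in> J" for x using assms(6) by blast
  have JPB: "Pl (Some k) \<in> J \<longleftrightarrow> Br (Some k) \<in> J" for k using Jb[of "Pl (Some k)"] Jb[of "Br (Some k)"] by auto
  have LHS: "Pl (Some i) \<in> phi scale m n V e J X \<longleftrightarrow>
     (\<exists>k. Pl (Some k) \<in> J \<and> (Some i \<in> ?mu (Pl (Some k)) X \<or> Some i \<in> ?mu (Br (Some k)) X))"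
    unfolding phi_mem
  proof
    assume "\<exists>j\<in>J. Some i \<in> ?mu j X"
    then obtain j where j: "j \<in> J" "Some i \<in> ?mu j X" by blast
    from j(1) assms(5) obtain k where "j = Pl (Some k) \<or> j = Br (Some k)" by auto
    thus "\<exists>k. Pl (Some k) \<in> J \<and> (Some i \<in> ?mu (Pl (Some k)) X \<or> Some i \<in> ?mu (Br (Some k)) X)"
      using j JPB[of k] by (elim disjE) (blast, blast)
  next
    assume "\<exists>k. Pl (Some k) \<in> J \<and> (Some i \<in> ?mu (Pl (Some k)) X \<or> Some i \<in> ?mu (Br (Some k)) X)"
    then obtain k where "Pl (Some k) \<in> J" "Some i \<in> ?mu (Pl (Some k)) X \<or> Some i \<in> ?mu (Br (Some k)) X" by blast
    thus "\<exists>j\<in>J. Some i \<in> ?mu j X" using JPB[of k] by (elim disjE) (blast, blast)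
  qed
  show ?thesis
  proof (cases "all_pl X")
    case True
    hence nb: "\<not> all_br X" using excl by auto
    have e1: "Some i \<in> ?mu (Pl (Some k)) X \<longleftrightarrow> (\<exists>\<sigma>. \<sigma> permutes {..<n} \<and> ?A \<sigma> (Some k # Y) = {Some i})" for k
      using True sing by (auto simp: Y_def)
    have e2: "Some i \<in> ?mu (Br (Some k)) X \<longleftrightarrow> (\<exists>t<n-1. \<exists>\<sigma>. \<sigma> permutes {..<n} \<and>
        ?A \<sigma> (Some i # Some k # map unsym (take t X @ drop (Suc t) X)) = {unsym (X ! t)})" for k
      using True by (auto simp: bmap_def)
    have e3: "Some k \<in> ?mu (Pl (Some i)) (map bar X) \<longleftrightarrow> (\<exists>\<sigma>. \<sigma> permutes {..<n} \<and> ?A \<sigma> (Some k # Y) = {Some i})" for k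
      using True nb plb brb Yb by (auto simp: bmap_def)
    have e4: "Some k \<in> ?mu (Br (Some i)) X \<longleftrightarrow> (\<exists>t<n-1. \<exists>\<sigma>. \<sigma> permutes {..<n} \<and>
        ?A \<sigma> (Some k # Some i # map unsym (take t X @ drop (Suc t) X)) = {unsym (X ! t)})" for k
      using True by (auto simp: bmap_def)
    have sw: "(\<exists>t<n-1. \<exists>\<sigma>. \<sigma> permutes {..<n} \<and>
        ?A \<sigma> (Some i # Some k # map unsym (take t X @ drop (Suc t) X)) = {unsym (X ! t)}) \<longleftrightarrow>
      (\<exists>t<n-1. \<exists>\<sigma>. \<sigma> permutes {..<n} \<and>
        ?A \<sigma> (Some k # Some i # map unsym (take t X @ drop (Suc t) X)) = {unsym (X ! t)})" for k
      by (simp only: ex_amap_swap[OF n, of scale m V e "Some i" "Some k"])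
    show ?thesis unfolding LHS phi_single e1 e2 e3 e4 sw by blast
  next
    case False
    hence b: "all_br X" using assms(8) by auto
    have e1: "Some i \<in> ?mu (Pl (Some k)) X \<longleftrightarrow> (\<exists>\<sigma>. \<sigma> permutes {..<n} \<and> ?A \<sigma> (Some i # Y) = {Some k})" for k
      using False b by (auto simp: Y_def bmap_def)
    have e2: "?mu (Br j) X = {}" for j using False by simp
    have e3: "Some k \<in> ?mu (Pl (Some i)) (map bar X) \<longleftrightarrow> (\<exists>\<sigma>. \<sigma> permutes {..<n} \<and> ?A \<sigma> (Some i # Y) = {Some k})" for k
      using b plb Yb sing by auto
    show ?thesis unfolding LHS phi_single e1 e2 e3 by blast
  qed
qed

end
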